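(* Let $\beta>0$ be the solution of $e^{1/\beta}=2+1/\beta$ (so $\beta\approx0.872453$) and let $\rho_1=e^{-1/\beta}\approx0.317844$. Let $\pi$ be any ordering of $[n]$ and let $p>0$ be a price such that $\mathbb{E}_{\mathbf v\sim\mathcal F}\big[\sum_{i\in[n]}y_i(\mathbf v,p,\pi)\big]=\rho_1$. Then \[ \mathbb{E}_{\mathbf v\sim\mathcal F}[\mathrm{SW}(\mathbf v,p,\pi)]\ \ge\ \rho_1\,\mathbb{E}_{\mathbf v\sim\mathcal F}[\mathrm{SW}^*(\mathbf v)]. \]
   Context: There are $n$ agents, identified with $[n]=\{1,\dots,n\}$, and one perfectly divisible item of size $1$. Each agent $i$ has a valuation function $v_i:[0,1]\to\mathbb{R}_{\ge0}$ that is non-decreasing and concave; $v_i$ is drawn from a publicly known distribution $\mathcal F_i$ over such functions, independently across agents, and $\mathbf v=(v_1,\dots,v_n)\sim\mathcal F=\mathcal F_1\times\cdots\times\mathcal F_n$. All expectations are assumed finite. Sequential posted pricing with linear pricing uses a price $p>0$ per unit and an ordering $\pi$ (a permutation of $[n]$): agents act in the order $\pi$; when agent $i$ acts she may buy any fraction of the still-unallocated part of the item, paying $p$ per unit, with utility $v_i(z)-pz$ for fraction $z$. $y^*_i(v_i,p)\in[0,1]$ denotes a maximizer of $z\mapsto v_i(z)-pz$ over $[0,1]$ (fixed measurable selection). With $B_\pi(i)$ the set of agents acting before $i$ in $\pi$, agent $i$ buys $y_i(\mathbf v,p,\pi)=\min\{y^*_i(v_i,p),\max\{0,1-\sum_{j\in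 B_\pi(i)}y^*_j(v_j,p)\}\}$. The welfare of the mechanism is $\mathrm{SW}(\mathbf v,p,\pi)=\sum_{i}v_i(y_i(\mathbf v,p,\pi))$. $x(\mathbf v)$ denotes a welfare-maximizing allocation ($x_i(\mathbf v)\ge0$, $\sum_i x_i(\mathbf v)=1$, maximizing $\sum_i v_i(x_i)$), and $\mathrm{SW}^*(\mathbf v)=\sum_i v_i(x_i(\mathbf v))$. *)

theory Defs
  imports "HOL-Probability.Probability"
begin

text \<open>Agents are indexed by 0,...,n-1. A valuation is a function on [0,1]
  (represented as real => real; only its values on [0,1] matter) that is
  non-negative, non-decreasing and concave on [0,1].\<close>

definition valuation :: "(real \<Rightarrow> real) \<Rightarrow> bool" where
  "valuation v \<longleftrightarrow> mono_on {0..1} v \<and> concave_on {0..1} v \<and> (\<forall>z\<in>{0..1}. 0 \<le> v z)"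

text \<open>An ordering is given by pos :: nat => nat, a bijection of {..<n}, where
  pos i is the position at which agent i acts. Agents acting before i:\<close>

definition before :: "nat \<Rightarrow> (nat \<Rightarrow> nat) \<Rightarrow> nat \<Rightarrow> nat set" where
  "before n pos i = {j \<in> {..<n}. pos j < pos i}"

text \<open>ystar i v p : the fixed selection of a maximizer of z -> v z - p z over [0,1].
  Amount bought by agent i under price p, ordering pos, profile vs:\<close>

definition ybuy :: "nat \<Rightarrow> (nat \<Rightarrow> (real \<Rightarrow> real) \<Rightarrow> real \<Rightarrow> real) \<Rightarrow> (nat \<Rightarrow> nat)
    \<Rightarrow> (nat \<Rightarrow> real \<Rightarrow> real) \<Rightarrow> real \<Rightarrow> nat \<Rightarrow> real" where
  "ybuy n ystar pos vs p i =
     min (ystar i (vs i) p) (max 0 (1 - (\<Sum>j\<in>before n pos i. ystar j (vs j) p)))"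

definition SW :: "nat \<Rightarrow> (nat \<Rightarrow> (real \<Rightarrow> real) \<Rightarrow> real \<Rightarrow> real) \<Rightarrow> (nat \<Rightarrow> nat)
    \<Rightarrow> (nat \<Rightarrow> real \<Rightarrow> real) \<Rightarrow> real \<Rightarrow> real" where
  "SW n ystar pos vs p = (\<Sum>i<n. vs i (ybuy n ystar pos vs p i))"

definition allocation :: "nat \<Rightarrow> (nat \<Rightarrow> real) \<Rightarrow> bool" where
  "allocation n x \<longleftrightarrow> (\<forall>i<n. 0 \<le> x i) \<and> (\<Sum>i<n. x i) = 1"

text \<open>Optimal welfare SW*(v): the maximum (written as supremum, which equals the
  maximum whenever a welfare-maximizing allocation exists) of the welfare over allocations.\<close>

definition SWopt :: "nat \<Rightarrow> (nat \<Rightarrow> real \<Rightarrow> real) \<Rightarrow> real" where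
  "SWopt n vs = (SUP x\<in>{x. allocation n x}. (\<Sum>i<n. vs i (x i)))"

end

theory Submission
  imports Defs
begin


definition Wf :: "real \<Rightarrow> (real \<Rightarrow> real) \<Rightarrow> real" where
  "Wf p v = (SUP q\<in>(\<rat> \<inter> {0..1}). min (v q - p*q) (v 1))"

lemma Wf_bdd: "bdd_above ((\<lambda>q. min (v q - p*q) (v 1)) ` (\<rat> \<inter> {0..1}))"
  by (rule bdd_aboveI2[where M="v 1"]) (simp add: min_def)

lemma Wf_upper: "q \<in> \<rat> \<Longrightarrow> q \<in> {0..1} \<Longrightarrow> min (v q - p*q) (v 1) \<le> Wf p v"
  unfolding Wf_def by (rule cSUP_upper[OF _ Wf_bdd]) auto

lemma Wf_props:
  assumes val: "valuation v" and y: "y \<in> {0..1}"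
    and mx: "\<forall>z\<in>{0..1}. v z - p*z \<le> v y - p*y" and p: "p > 0"
  shows "Wf p v \<le> v y - p*y" "\<And>x. x \<in> {0..1} \<Longrightarrow> v x - p*x \<le> Wf p v"
    "0 \<le> Wf p v" "Wf p v \<le> v 1"
proof -
  have mono: "mono_on {0..1} v" and nn: "\<And>z. z \<in> {0..1} \<Longrightarrow> 0 \<le> v z"
    using val unfolding valuation_def by auto
  have term_eq: "min (v q - p*q) (v 1) = v q - p*q" if "q \<in> {0..1}" for q
  proof -
    have "v q \<le> v 1" using mono that by (auto intro: mono_onD)
    moreover have "0 \<le> p*q" using p that by simp
    ultimately show ?thesis by (simp add: min_def)
  qed
  have ne: "\<rat> \<inter> {0..1::real} \<noteq> {}" by (auto intro: exI[of _ 0])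
  show "Wf p v \<le> v y - p*y" unfolding Wf_def
    by (rule cSUP_least[OF ne]) (use mx term_eq in auto)
  show "Wf p v \<le> v 1" unfolding Wf_def
    by (rule cSUP_least[OF ne]) auto
  show lower: "v x - p*x \<le> Wf p v" if x: "x \<in> {0..1}" for x
  proof (rule ccontr)
    assume neg: "\<not> v x - p*x \<le> Wf p v"
    define e where "e = (v x - p*x - Wf p v) / p"
    have e: "e > 0" using neg p by (simp add: e_def)
    obtain q where q: "q \<in> \<rat>" "x \<le> q" "q \<le> 1" "q < x + e"
    proof (cases "x = 1")
      case True then show ?thesis using that[of 1] e by auto
    next
      case False
      then have "x < min 1 (x+e)" using x e by auto
      then obtain q where "q \<in> \<rat>" "x < q" "q < min 1 (x+e)"
        using Rats_dense_in_real by blast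
      then show ?thesis using that[of q] by auto
    qed
    have q01: "q \<in> {0..1}" using q x by auto
    have "v x \<le> v q" using mono q01 x q by (auto intro: mono_onD)
    then have "v x - p*x - p*e < v q - p*q" using q p
    proof -
      have "p*(q-x) < p*e" using p q by simp
      then show ?thesis using \<open>v x \<le> v q\<close> by (simp add: algebra_simps)
    qed
    also have "\<dots> \<le> Wf p v" using Wf_upper[OF q(1) q01, of v p] term_eq[OF q01] by simp
    finally show False using p by (simp add: e_def)
  qed
  show "0 \<le> Wf p v" using lower[of 0] nn[of 0] by simp
qed

lemma agent_bound:
  assumes val: "valuation v" and y: "y \<in> {0..1}"
    and mx: "\<forall>z\<in>{0..1}. v z - p*z \<le> v y - p*y" and r: "r \<in> {0..1}"
  shows "v (min y r) \<ge> p * min y r + r * (v y - p*y)"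
proof -
  have conc: "concave_on {0..1} v" and nn: "\<And>z. z \<in> {0..1} \<Longrightarrow> 0 \<le> v z"
    using val unfolding valuation_def by auto
  have U: "v y - p*y \<ge> 0" using mx nn[of 0] by force
  show ?thesis
  proof (cases "y \<le> r")
    case True
    then have "r * (v y - p*y) \<le> v y - p*y" using r U by (simp add: mult_left_le_one_le)
    then show ?thesis using True by simp
  next
    case False
    define t where "t = r / y"
    have ypos: "y > 0" using False r by auto
    have t: "0 \<le> t" "t \<le> 1" using False r ypos by (auto simp: t_def)
    have rt: "r = t * y" using ypos by (simp add: t_def)
    have "v ((1 - t) *\<^sub>R 0 + t *\<^sub>R y) \<ge> (1 - t) * v 0 + t * v y"
      by (rule concave_onD[OF conc t]) (use y in auto)
    then have "v r \<ge> (1 - t) * v 0 + t * v y" by (simp add: rt)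
    moreover have "(1 - t) * v 0 \<ge> 0" using t nn[of 0] by simp
    moreover have "r * (v y - p*y) \<le> t * (v y - p*y)"
    proof -
      have "0 \<le> r * (v y - p*y)" using U r by simp
      then have "y * (r * (v y - p*y)) \<le> r * (v y - p*y)"
        using y ypos by (intro mult_left_le_one_le) auto
      then show ?thesis using ypos by (simp add: t_def divide_simps mult.commute)
    qed
    ultimately show ?thesis using False rt by (simp add: algebra_simps)
  qed
qed



lemma sold_bound:
  assumes ynn: "\<And>j. j < n \<Longrightarrow> 0 \<le> ystar j (vs j) p" and i: "i < n"
  shows "1 - (\<Sum>k<n. ybuy n ystar pos vs p k)
          \<le> max 0 (1 - (\<Sum>j\<in>before n pos i. ystar j (vs j) p))"
proof -
  define y where "y j = ystar j (vs j) p" for j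
  define s where "s j = (\<Sum>l\<in>before n pos j. y l)" for j
  define b where "b j = ybuy n ystar pos vs p j" for j
  have b_def': "b j = min (y j) (max 0 (1 - s j))" for j
    by (simp add: b_def y_def s_def ybuy_def)
  have fin: "finite (before n pos j)" for j by (simp add: before_def)
  have sub: "before n pos j \<subseteq> {..<n}" for j by (auto simp: before_def)
  have b0: "j < n \<Longrightarrow> 0 \<le> b j" for j using ynn by (simp add: b_def' y_def)
  have s0: "0 \<le> s j" for j unfolding s_def using sub ynn by (auto simp: y_def intro!: sum_nonneg)
  have f1: "b j = y j" if "s j + y j \<le> 1" for j using that by (simp add: b_def')
  have f2: "s j + y j \<le> s k" if "j \<in> before n pos k" for j k
  proof -
    have jn: "j < n" and jk: "pos j < pos k" using that by (auto simp: before_def)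
    have "insert j (before n pos j) \<subseteq> before n pos k" using jn jk by (auto simp: before_def)
    moreover have "j \<notin> before n pos j" by (simp add: before_def)
    ultimately have "(\<Sum>l\<in>insert j (before n pos j). y l) \<le> s k"
      unfolding s_def using fin sub ynn by (intro sum_mono2) (auto simp: y_def)
    then show ?thesis using fin \<open>j \<notin> before n pos j\<close> by (simp add: s_def)
  qed
  have f3: "(\<Sum>l\<in>A. b l) \<le> (\<Sum>l<n. b l)" if "A \<subseteq> {..<n}" for A
    using that b0 by (intro sum_mono2) auto
  have f4: "(\<Sum>l\<in>before n pos k. b l) = s k"
    if "\<And>j. j \<in> before n pos k \<Longrightarrow> s j + y j \<le> 1" for k
    unfolding s_def using that f1 by (intro sum.cong) auto
  show ?thesis
  proof (cases "s i < 1")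
    case True
    then have "(\<Sum>l\<in>before n pos i. b l) = s i" using f2 by (intro f4) force
    then have "s i \<le> (\<Sum>l<n. b l)" using f3[OF sub[of i]] by simp
    then show ?thesis by (simp add: b_def s_def y_def)
  next
    case False
    define A where "A = {j. j < n \<and> 1 \<le> s j + y j}"
    have "i \<in> A" using False i ynn[OF i] by (auto simp: A_def y_def)
    then obtain k where k: "k \<in> A" and kmin: "\<And>j. j \<in> A \<Longrightarrow> pos k \<le> pos j"
      using ex_has_least_nat[of "\<lambda>j. j \<in> A" i pos] by blast
    have kn: "k < n" using k by (simp add: A_def)
    have "s j + y j \<le> 1" if "j \<in> before n pos k" for j
    proof -
      have "j < n" "pos j < pos k" using that by (auto simp: before_def)
      then have "j \<notin> A" using kmin by force
      then show ?thesis using \<open>j < n\<close> by (simp add: A_def)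
    qed
    then have sk: "(\<Sum>l\<in>before n pos k. b l) = s k" by (rule f4)
    have "1 \<le> (\<Sum>l<n. b l)"
    proof (cases "1 \<le> s k")
      case True then show ?thesis using sk f3[OF sub[of k]] by simp
    next
      case False
      then have bk: "b k = 1 - s k" using k by (simp add: b_def' A_def)
      have kni: "k \<notin> before n pos k" by (simp add: before_def)
      have "insert k (before n pos k) \<subseteq> {..<n}" using kn sub by auto
      then have "(\<Sum>l\<in>insert k (before n pos k). b l) \<le> (\<Sum>l<n. b l)" by (rule f3)
      then show ?thesis using sk bk kni fin by simp
    qed
    then show ?thesis by (simp add: b_def)
  qed
qed



definition Rf :: "nat \<Rightarrow> (nat \<Rightarrow> (real \<Rightarrow> real) \<Rightarrow> real \<Rightarrow> real) \<Rightarrow> (nat \<Rightarrow> nat)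
    \<Rightarrow> real \<Rightarrow> nat \<Rightarrow> (nat \<Rightarrow> real \<Rightarrow> real) \<Rightarrow> real" where
  "Rf n ystar pos p i vs = min 1 (max 0 (1 - (\<Sum>j\<in>before n pos i. ystar j (vs j) p)))"

locale goodv =
  fixes n :: nat and ystar :: "nat \<Rightarrow> (real \<Rightarrow> real) \<Rightarrow> real \<Rightarrow> real" and p :: real and vs :: "nat \<Rightarrow> real \<Rightarrow> real"
  assumes val: "\<And>i. i < n \<Longrightarrow> valuation (vs i)"
    and y01: "\<And>i. i < n \<Longrightarrow> ystar i (vs i) p \<in> {0..1}"
    and mx: "\<And>i. i < n \<Longrightarrow> \<forall>z\<in>{0..1}. vs i z - p*z \<le> vs i (ystar i (vs i) p) - p * ystar i (vs i) p"
    and p: "p > 0"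
begin

lemma R_eq: "Rf n ystar pos p i vs = max 0 (1 - (\<Sum>j\<in>before n pos i. ystar j (vs j) p))"
proof -
  have "0 \<le> (\<Sum>j\<in>before n pos i. ystar j (vs j) p)"
    using y01 by (intro sum_nonneg) (auto simp: before_def)
  then show ?thesis by (simp add: Rf_def)
qed

lemma R_ge: "i < n \<Longrightarrow> 1 - (\<Sum>k<n. ybuy n ystar pos vs p k) \<le> Rf n ystar pos p i vs"
  unfolding R_eq using y01 by (intro sold_bound) auto

lemma SW_lower:
  "SW n ystar pos vs p \<ge> p * (\<Sum>k<n. ybuy n ystar pos vs p k)
     + (\<Sum>i<n. Rf n ystar pos p i vs * Wf p (vs i))"
proof -
  have "p * ybuy n ystar pos vs p i + Rf n ystar pos p i vs * Wf p (vs i)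
        \<le> vs i (ybuy n ystar pos vs p i)" if i: "i < n" for i
  proof -
    define r where "r = Rf n ystar pos p i vs"
    have r: "r \<in> {0..1}" by (simp add: r_def Rf_def)
    have yb: "ybuy n ystar pos vs p i = min (ystar i (vs i) p) r"
      by (simp add: r_def R_eq ybuy_def)
    have "vs i (min (ystar i (vs i) p) r) \<ge> p * min (ystar i (vs i) p) r
            + r * (vs i (ystar i (vs i) p) - p * ystar i (vs i) p)"
      by (rule agent_bound[OF val[OF i] y01[OF i] mx[OF i] r])
    moreover have "Wf p (vs i) \<le> vs i (ystar i (vs i) p) - p * ystar i (vs i) p"
      by (rule Wf_props(1)[OF val[OF i] y01[OF i] mx[OF i] p])
    then have "r * Wf p (vs i) \<le> r * (vs i (ystar i (vs i) p) - p * ystar i (vs i) p)"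
      using r by (intro mult_left_mono) auto
    ultimately show ?thesis by (simp add: yb r_def)
  qed
  then have "(\<Sum>i<n. p * ybuy n ystar pos vs p i + Rf n ystar pos p i vs * Wf p (vs i))
        \<le> (\<Sum>i<n. vs i (ybuy n ystar pos vs p i))" by (intro sum_mono) auto
  then show ?thesis by (simp add: SW_def sum.distrib sum_distrib_left)
qed

lemma alloc_le1: "allocation n x \<Longrightarrow> i < n \<Longrightarrow> x i \<in> {0..1}"
proof -
  assume a: "allocation n x" and i: "i < n"
  then have "x i \<le> (\<Sum>j<n. x j)" by (intro member_le_sum) (auto simp: allocation_def)
  then show ?thesis using a i by (auto simp: allocation_def)
qed

lemma alloc_bdd: "bdd_above ((\<lambda>x. \<Sum>i<n. vs i (x i)) ` {x. allocation n x})"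
proof (rule bdd_aboveI2[where M="\<Sum>i<n. vs i 1"])
  fix x assume "x \<in> {x. allocation n x}"
  then have a: "allocation n x" by simp
  show "(\<Sum>i<n. vs i (x i)) \<le> (\<Sum>i<n. vs i 1)"
  proof (intro sum_mono)
    fix i assume "i \<in> {..<n}"
    then have i: "i < n" by simp
    have "mono_on {0..1} (vs i)" using val[OF i] by (simp add: valuation_def)
    then show "vs i (x i) \<le> vs i 1" using alloc_le1[OF a i] by (auto intro: mono_onD)
  qed
qed

lemma SWopt_upper: assumes n: "0 < n" shows "SWopt n vs \<le> p + (\<Sum>i<n. Wf p (vs i))"
  unfolding SWopt_def
proof (rule cSUP_least)
  show "{x. allocation n x} \<noteq> {}"
  proof -
    have "allocation n (\<lambda>i. if i = 0 then 1 else 0)"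
      using n by (simp add: allocation_def sum.delta)
    then show ?thesis by blast
  qed
next
  fix x assume "x \<in> {x. allocation n x}"
  then have a: "allocation n x" by simp
  have "vs i (x i) \<le> p * x i + Wf p (vs i)" if i: "i < n" for i
    using Wf_props(2)[OF val[OF i] y01[OF i] mx[OF i] p alloc_le1[OF a i]] by simp
  then have "(\<Sum>i<n. vs i (x i)) \<le> (\<Sum>i<n. p * x i + Wf p (vs i))" by (intro sum_mono) auto
  also have "\<dots> = p + (\<Sum>i<n. Wf p (vs i))"
    using a by (simp add: sum.distrib flip: sum_distrib_left add: allocation_def)
  finally show "(\<Sum>i<n. vs i (x i)) \<le> p + (\<Sum>i<n. Wf p (vs i))" .
qed

lemma W_nonneg: "i < n \<Longrightarrow> 0 \<le> Wf p (vs i)"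
  using Wf_props(3)[OF val y01 mx p] by blast

lemma W_le_SWopt: assumes i: "i < n" shows "Wf p (vs i) \<le> SWopt n vs"
proof -
  define e where "e j = (if j = i then 1 else (0::real))" for j
  have a: "allocation n e" using i by (simp add: allocation_def e_def sum.delta)
  have nn: "0 \<le> vs j (e j)" if "j < n" for j
    using val[OF that] by (auto simp: valuation_def e_def)
  have "Wf p (vs i) \<le> vs i (e i)" using Wf_props(4)[OF val[OF i] y01[OF i] mx[OF i] p] by (simp add: e_def)
  also have "\<dots> \<le> (\<Sum>j<n. vs j (e j))" using i nn by (intro member_le_sum) auto
  also have "\<dots> \<le> SWopt n vs" unfolding SWopt_def
    by (rule cSUP_upper[OF _ alloc_bdd]) (use a in simp)
  finally show ?thesis .
qed

end


theorem mainTheorem2: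
  fixes n :: nat
    and F :: "nat \<Rightarrow> (real \<Rightarrow> real) measure"
    and ystar :: "nat \<Rightarrow> (real \<Rightarrow> real) \<Rightarrow> real \<Rightarrow> real"
    and pos :: "nat \<Rightarrow> nat"
    and p \<beta> :: real
  assumes beta_pos: "\<beta> > 0"
    and beta_eq: "exp (1 / \<beta>) = 2 + 1 / \<beta>"
    and prob: "\<And>i. i < n \<Longrightarrow> prob_space (F i)"
    and eval_meas: "\<And>i z. i < n \<Longrightarrow> (\<lambda>v. v z) \<in> borel_measurable (F i)"
    and val_AE: "\<And>i. i < n \<Longrightarrow> (AE v in F i. valuation v)"
    and ystar_meas: "\<And>i. i < n \<Longrightarrow> (\<lambda>v. ystar i v p) \<in> borel_measurable (F i)"
    and ystar_max: "\<And>i. i < n \<Longrightarrow> (AE v in F i.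
           ystar i v p \<in> {0..1} \<and> (\<forall>z\<in>{0..1}. v z - p * z \<le> v (ystar i v p) - p * ystar i v p))"
    and ordering: "bij_betw pos {..<n} {..<n}"
    and p_pos: "p > 0"
    and int_SW: "integrable (PiM {..<n} F) (\<lambda>vs. SW n ystar pos vs p)"
    and int_SWopt: "integrable (PiM {..<n} F) (\<lambda>vs. SWopt n vs)"
    and int_y: "integrable (PiM {..<n} F) (\<lambda>vs. \<Sum>i<n. ybuy n ystar pos vs p i)"
    and expected_sold: "(\<integral>vs. (\<Sum>i<n. ybuy n ystar pos vs p i) \<partial>PiM {..<n} F) = exp (- 1 / \<beta>)"
  shows "(\<integral>vs. SW n ystar pos vs p \<partial>PiM {..<n} F)
           \<ge> exp (- 1 / \<beta>) * (\<integral>vs. SWopt n vs \<partial>PiM {..<n} F)"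
proof -
  define M where "M = PiM {..<n} F"
  define \<rho> where "\<rho> = exp (- 1 / \<beta>)"
  define I where "I = {..<n}"
  define Sd where "Sd vs = (\<Sum>i<n. ybuy n ystar pos vs p i)" for vs
  define R where "R i vs = Rf n ystar pos p i vs" for i :: nat and vs :: "nat \<Rightarrow> real \<Rightarrow> real"
  define W where "W i vs = Wf p (vs i)" for i :: nat and vs :: "nat \<Rightarrow> real \<Rightarrow> real"
  interpret P: prob_space M unfolding M_def by (rule prob_space_PiM) (use prob in auto)
  have rho_pos: "0 < \<rho>" by (simp add: \<rho>_def)
  have rho_half: "\<rho> \<le> 1/2"
  proof -
    have "0 < 1/\<beta>" using beta_pos by simp
    then have e2: "exp (1/\<beta>) \<ge> 2" using beta_eq by linarith
    have "exp (- 1 / \<beta>) = inverse (exp (1/\<beta>))"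
      by (simp add: exp_minus[symmetric])
    also have "\<dots> \<le> inverse 2" using e2 by (intro le_imp_inverse_le) auto
    finally show ?thesis by (simp add: \<rho>_def)
  qed
  have n0: "0 < n"
  proof (rule ccontr)
    assume "\<not> 0 < n"
    then have "n = 0" by simp
    then have "(\<integral>vs. (\<Sum>i<n. ybuy n ystar pos vs p i) \<partial>PiM {..<n} F) = 0" by simp
    then show False using expected_sold by simp
  qed
  have In: "I \<noteq> {}" using n0 by (auto simp: I_def)
  have AEgood: "AE vs in M. goodv n ystar p vs"
  proof -
    have "AE vs in M. \<forall>i\<in>{..<n}. valuation (vs i) \<and> ystar i (vs i) p \<in> {0..1}
        \<and> (\<forall>z\<in>{0..1}. vs i z - p * z \<le> vs i (ystar i (vs i) p) - p * ystar i (vs i) p)"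
    proof (rule AE_finite_allI)
      fix i assume i: "i \<in> {..<n}"
      have AEi: "AE v in F i. valuation v \<and> ystar i v p \<in> {0..1}
          \<and> (\<forall>z\<in>{0..1}. v z - p * z \<le> v (ystar i v p) - p * ystar i v p)"
      proof -
        have i': "i < n" using i by simp
        show ?thesis using val_AE[OF i'] ystar_max[OF i'] by eventually_elim auto
      qed
      show "AE vs in M. valuation (vs i) \<and> ystar i (vs i) p \<in> {0..1}
        \<and> (\<forall>z\<in>{0..1}. vs i z - p * z \<le> vs i (ystar i (vs i) p) - p * ystar i (vs i) p)"
        unfolding M_def by (rule AE_PiM_component[where P="\<lambda>v. valuation v \<and> ystar i v p \<in> {0..1}
          \<and> (\<forall>z\<in>{0..1}. v z - p * z \<le> v (ystar i v p) - p * ystar i v p)"]) (use prob i AEi in auto)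
    qed simp
    then show ?thesis by eventually_elim (use p_pos in \<open>auto simp: goodv_def\<close>)
  qed
  have Wm: "Wf p \<in> borel_measurable (F i)" if i: "i < n" for i
  proof -
    have [measurable]: "\<And>z. (\<lambda>v. v z) \<in> borel_measurable (F i)" using eval_meas[OF i] .
    show ?thesis unfolding Wf_def[abs_def]
      by (rule borel_measurable_cSUP) (auto intro: countable_rat Wf_bdd)
  qed
  have yjm: "(\<lambda>\<omega>. ystar j (\<omega> j) p) \<in> borel_measurable (PiM A F)" if "j \<in> A" "A \<subseteq> {..<n}" for j A
    using that by (intro measurable_compose[OF measurable_component_singleton[of j A F] ystar_meas[of j]]) auto
  have Ym: "(\<lambda>\<omega>. min 1 (max 0 (1 - (\<Sum>j\<in>B. ystar j (\<omega> j) p)))) \<in> borel_measurable (PiM A F)"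
    if A: "B \<subseteq> A" "A \<subseteq> {..<n}" for A B
    using A by (intro borel_measurable_min borel_measurable_max borel_measurable_const
        borel_measurable_diff borel_measurable_sum yjm) auto
  have Wm2: "(\<lambda>\<omega>. Wf p (\<omega> i)) \<in> borel_measurable (PiM A F)" if "i \<in> A" "A \<subseteq> {..<n}" for i A
    using that by (intro measurable_compose[OF measurable_component_singleton[of i A F] Wm[of i]]) auto
  have bsub: "before n pos i \<subseteq> {..<n}" for i by (auto simp: before_def)
  have R_alt: "R i = (\<lambda>\<omega>. min 1 (max 0 (1 - (\<Sum>j\<in>before n pos i. ystar j (\<omega> j) p))))" for i
    by (simp add: R_def Rf_def fun_eq_iff)
  have Rm: "R i \<in> borel_measurable M" for i
    unfolding R_alt M_def by (rule Ym[OF bsub subset_refl])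
  have indep: "P.indep_vars F (\<lambda>i \<omega>. \<omega> i) I"
  proof -
    have "P.indep_vars F (\<lambda>i \<omega>. \<omega> i) I \<longleftrightarrow>
        distr M (PiM I F) (\<lambda>x. \<lambda>i\<in>I. x i) = PiM I (\<lambda>i. distr M (F i) (\<lambda>\<omega>. \<omega> i))"
      by (rule P.indep_vars_iff_distr_eq_PiM'[OF In]) (simp add: M_def I_def)
    moreover have "distr M (PiM I F) (\<lambda>x. \<lambda>i\<in>I. x i) = M"
    proof -
      have "distr M (PiM I F) (\<lambda>x. \<lambda>i\<in>I. x i) = distr M M (\<lambda>x. x)"
        by (rule distr_cong) (auto simp: M_def I_def space_PiM PiE_restrict)
      also have "\<dots> = M" by (rule distr_id2) simp
      finally show ?thesis .
    qed
    moreover have "PiM I (\<lambda>i. distr M (F i) (\<lambda>\<omega>. \<omega> i)) = PiM I F"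
      by (rule PiM_cong) (auto simp: M_def I_def intro!: distr_PiM_component prob)
    ultimately show ?thesis by (simp add: M_def I_def)
  qed
  have indepRW: "P.indep_var borel (R i) borel (W i)" if i: "i < n" for i
  proof -
    define A where "A = before n pos i"
    have iA: "i \<notin> A" by (simp add: A_def before_def)
    have "P.indep_var (PiM A F) (\<lambda>\<omega>. restrict (\<lambda>j. \<omega> j) A) (PiM {i} F) (\<lambda>\<omega>. restrict (\<lambda>j. \<omega> j) {i})"
      by (rule P.indep_var_restrict[OF indep]) (use iA i bsub in \<open>auto simp: A_def I_def\<close>)
    then have "P.indep_var borel ((\<lambda>\<omega>. min 1 (max 0 (1 - (\<Sum>j\<in>A. ystar j (\<omega> j) p)))) \<circ> (\<lambda>\<omega>. restrict (\<lambda>j. \<omega> j) A))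
       borel ((\<lambda>\<omega>. Wf p (\<omega> i)) \<circ> (\<lambda>\<omega>. restrict (\<lambda>j. \<omega> j) {i}))"
      by (rule P.indep_var_compose[OF _ Ym Wm2]) (use i bsub in \<open>auto simp: A_def\<close>)
    moreover have "W i = (\<lambda>\<omega>. Wf p (\<omega> i))" by (simp add: W_def fun_eq_iff)
    ultimately show ?thesis by (simp add: R_alt comp_def A_def cong: sum.cong)
  qed
  have intR: "integrable M (R i)" for i
    by (rule P.integrable_const_bound[where B=1]) (auto simp: R_def Rf_def Rm)
  have Wm3: "W i \<in> borel_measurable M" if "i < n" for i
    unfolding W_def M_def by (rule Wm2) (use that in auto)
  have intW: "integrable M (W i)" if i: "i < n" for i
  proof (rule Bochner_Integration.integrable_bound[OF int_SWopt[folded M_def] Wm3[OF i]])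
    show "AE x in M. norm (W i x) \<le> norm (SWopt n x)"
      using AEgood by eventually_elim
        (use i goodv.W_nonneg goodv.W_le_SWopt in \<open>fastforce simp: W_def\<close>)
  qed
  have intRW: "integrable M (\<lambda>\<omega>. R i \<omega> * W i \<omega>)" if "i < n" for i
    by (rule P.indep_var_integrable[OF indepRW[OF that] intR intW[OF that]])
  have EPW: "(\<integral>\<omega>. R i \<omega> * W i \<omega> \<partial>M) = (\<integral>\<omega>. R i \<omega> \<partial>M) * (\<integral>\<omega>. W i \<omega> \<partial>M)" if "i < n" for i
    by (rule P.indep_var_lebesgue_integral[OF indepRW[OF that] intR intW[OF that]])
  have intSd: "integrable M Sd" using int_y by (simp add: M_def Sd_def[abs_def])
  have ESd: "(\<integral>\<omega>. Sd \<omega> \<partial>M) = \<rho>" using expected_sold by (simp add: M_def Sd_def \<rho>_def)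
  have ER: "(\<integral>\<omega>. R i \<omega> \<partial>M) \<ge> 1 - \<rho>" if i: "i < n" for i
  proof -
    have "(\<integral>\<omega>. 1 - Sd \<omega> \<partial>M) \<le> (\<integral>\<omega>. R i \<omega> \<partial>M)"
    proof (rule integral_mono_AE[OF _ intR])
      show "integrable M (\<lambda>\<omega>. 1 - Sd \<omega>)" using intSd by (intro Bochner_Integration.integrable_diff) auto
      show "AE \<omega> in M. 1 - Sd \<omega> \<le> R i \<omega>"
        using AEgood by eventually_elim (use i goodv.R_ge in \<open>auto simp: Sd_def R_def\<close>)
    qed
    moreover have "(\<integral>\<omega>. 1 - Sd \<omega> \<partial>M) = 1 - \<rho>"
      using intSd ESd by (simp add: Bochner_Integration.integral_diff P.prob_space)
    ultimately show ?thesis by simp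
  qed
  have EW0: "(\<integral>\<omega>. W i \<omega> \<partial>M) \<ge> 0" if i: "i < n" for i
    by (rule integral_nonneg_AE) (use AEgood in \<open>eventually_elim, use i goodv.W_nonneg in \<open>auto simp: W_def\<close>\<close>)
  define X where "X = (\<Sum>i<n. (\<integral>\<omega>. W i \<omega> \<partial>M))"
  have X0: "X \<ge> 0" unfolding X_def using EW0 by (intro sum_nonneg) auto
  have low: "(\<integral>\<omega>. SW n ystar pos \<omega> p \<partial>M) \<ge> p * \<rho> + (1 - \<rho>) * X"
  proof -
    have "(\<integral>\<omega>. p * Sd \<omega> + (\<Sum>i<n. R i \<omega> * W i \<omega>) \<partial>M) \<le> (\<integral>\<omega>. SW n ystar pos \<omega> p \<partial>M)"
    proof (rule integral_mono_AE)
      show "integrable M (\<lambda>\<omega>. p * Sd \<omega> + (\<Sum>i<n. R i \<omega> * W i \<omega>))"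
        using intSd intRW by (intro Bochner_Integration.integrable_add Bochner_Integration.integrable_mult_right
            Bochner_Integration.integrable_sum) auto
      show "integrable M (\<lambda>\<omega>. SW n ystar pos \<omega> p)" using int_SW by (simp add: M_def)
      show "AE \<omega> in M. p * Sd \<omega> + (\<Sum>i<n. R i \<omega> * W i \<omega>) \<le> SW n ystar pos \<omega> p"
        using AEgood by eventually_elim (use goodv.SW_lower in \<open>auto simp: Sd_def R_def W_def\<close>)
    qed
    moreover have "(\<integral>\<omega>. p * Sd \<omega> + (\<Sum>i<n. R i \<omega> * W i \<omega>) \<partial>M)
        = p * \<rho> + (\<Sum>i<n. (\<integral>\<omega>. R i \<omega> \<partial>M) * (\<integral>\<omega>. W i \<omega> \<partial>M))"
    proof -
      have i1: "integrable M (\<lambda>\<omega>. p * Sd \<omega>)" using intSd by simp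
      have i2: "integrable M (\<lambda>\<omega>. \<Sum>i<n. R i \<omega> * W i \<omega>)"
        using intRW by (intro Bochner_Integration.integrable_sum) auto
      have "(\<integral>\<omega>. p * Sd \<omega> + (\<Sum>i<n. R i \<omega> * W i \<omega>) \<partial>M)
          = (\<integral>\<omega>. p * Sd \<omega> \<partial>M) + (\<integral>\<omega>. (\<Sum>i<n. R i \<omega> * W i \<omega>) \<partial>M)"
        by (rule Bochner_Integration.integral_add[OF i1 i2])
      also have "(\<integral>\<omega>. p * Sd \<omega> \<partial>M) = p * \<rho>" using ESd by simp
      also have "(\<integral>\<omega>. (\<Sum>i<n. R i \<omega> * W i \<omega>) \<partial>M) = (\<Sum>i<n. (\<integral>\<omega>. R i \<omega> * W i \<omega> \<partial>M))"
        using intRW by (intro Bochner_Integration.integral_sum) auto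
      also have "\<dots> = (\<Sum>i<n. (\<integral>\<omega>. R i \<omega> \<partial>M) * (\<integral>\<omega>. W i \<omega> \<partial>M))"
        using EPW by (intro sum.cong) auto
      finally show ?thesis .
    qed
    moreover have "(1 - \<rho>) * X \<le> (\<Sum>i<n. (\<integral>\<omega>. R i \<omega> \<partial>M) * (\<integral>\<omega>. W i \<omega> \<partial>M))"
      unfolding X_def sum_distrib_left using ER EW0 by (intro sum_mono mult_right_mono) auto
    ultimately show ?thesis by linarith
  qed
  have up: "(\<integral>\<omega>. SWopt n \<omega> \<partial>M) \<le> p + X"
  proof -
    have "(\<integral>\<omega>. SWopt n \<omega> \<partial>M) \<le> (\<integral>\<omega>. p + (\<Sum>i<n. W i \<omega>) \<partial>M)"
    proof (rule integral_mono_AE)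
      show "integrable M (\<lambda>\<omega>. p + (\<Sum>i<n. W i \<omega>))"
        using intW by (intro Bochner_Integration.integrable_add Bochner_Integration.integrable_sum) auto
      show "integrable M (\<lambda>\<omega>. SWopt n \<omega>)" using int_SWopt by (simp add: M_def)
      show "AE \<omega> in M. SWopt n \<omega> \<le> p + (\<Sum>i<n. W i \<omega>)"
        using AEgood by eventually_elim (use goodv.SWopt_upper[OF _ n0] in \<open>auto simp: W_def\<close>)
    qed
    also have "\<dots> = p + X"
    proof -
      have i2: "integrable M (\<lambda>\<omega>. \<Sum>i<n. W i \<omega>)"
        using intW by (intro Bochner_Integration.integrable_sum) auto
      have "(\<integral>\<omega>. p + (\<Sum>i<n. W i \<omega>) \<partial>M) = (\<integral>\<omega>. p \<partial>M) + (\<integral>\<omega>. (\<Sum>i<n. W i \<omega>) \<partial>M)"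
        by (rule Bochner_Integration.integral_add[OF _ i2]) simp
      also have "(\<integral>\<omega>. p \<partial>M) = p" by (simp add: P.prob_space)
      also have "(\<integral>\<omega>. (\<Sum>i<n. W i \<omega>) \<partial>M) = X"
        unfolding X_def using intW by (intro Bochner_Integration.integral_sum) auto
      finally show ?thesis .
    qed
    finally show ?thesis .
  qed
  have "\<rho> * (\<integral>\<omega>. SWopt n \<omega> \<partial>M) \<le> \<rho> * (p + X)"
    using up rho_pos by (intro mult_left_mono) auto
  also have "\<dots> \<le> p * \<rho> + (1 - \<rho>) * X"
  proof -
    have "\<rho> * X \<le> (1 - \<rho>) * X" using X0 rho_half by (intro mult_right_mono) auto
    then show ?thesis by (simp add: algebra_simps)
  qed
  also have "\<dots> \<le> (\<integral>\<omega>. SW n ystar pos \<omega> p \<partial>M)" by (rule low)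
  finally show ?thesis by (simp add: M_def \<rho>_def)
qed


end
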